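(* Suppose that $$\|\theta^*\|\,\mathbb{E}_{x\sim Q}\Big[\sup_{\delta\in\mathbb{R}^D:\|\delta\|\le\|\theta^*\|}\|\nabla_\theta r(x;\theta^*+\delta)\|\Big]\le c,\qquad 0<c<1.$$ Then $\mathbb{E}_{x\sim Q}\big[\inf_{\delta\in\mathbb{R}^D:\|\delta\|\le\|\theta^*\|}r(x;\theta^*+\delta)\big]\ge 1-c$.
   Context: $Q$ is a distribution on $\mathbb{R}^m$ with density $q$; $f:\mathbb{R}^m\to\mathbb{R}^D$ is a feature map; the density ratio model is $r(x;\theta)=\exp(\theta^\top f(x))/N(\theta)$ with $N(\theta)=\mathbb{E}_{x\sim Q}[\exp(\theta^\top f(x))]$; $\theta^*\in\mathbb{R}^D$ is fixed; $\|\cdot\|$ is the Euclidean norm and $\nabla_\theta r$ the gradient in $\theta$. *)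

theory Defs
  imports "HOL-Analysis.Analysis" "HOL-Probability.Probability"
begin

definition normconst :: "'a measure \<Rightarrow> ('a \<Rightarrow> 'b::euclidean_space) \<Rightarrow> 'b \<Rightarrow> real" where
  "normconst Q f \<theta> = (\<integral>x. exp (\<theta> \<bullet> f x) \<partial>Q)"

definition ratio :: "'a measure \<Rightarrow> ('a \<Rightarrow> 'b::euclidean_space) \<Rightarrow> 'a \<Rightarrow> 'b \<Rightarrow> real" where
  "ratio Q f x \<theta> = exp (\<theta> \<bullet> f x) / normconst Q f \<theta>"

definition ratio_grad :: "'a measure \<Rightarrow> ('a \<Rightarrow> 'b::euclidean_space) \<Rightarrow> 'a \<Rightarrow> 'b \<Rightarrow> 'b" where
  "ratio_grad Q f x \<theta> = (THE D. GDERIV (\<lambda>t. ratio Q f x t) \<theta> :> D)"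

end

theory Submission
  imports Defs
begin

lemma linear_repr:
  fixes g :: "'b::euclidean_space \<Rightarrow> real"
  assumes "linear g"
  shows "g = (\<lambda>h. h \<bullet> (\<Sum>b\<in>Basis. g b *\<^sub>R b))"
proof
  fix h :: 'b
  have "g h = g (\<Sum>b\<in>Basis. (h \<bullet> b) *\<^sub>R b)" by (simp add: euclidean_representation)
  also have "\<dots> = (\<Sum>b\<in>Basis. (h \<bullet> b) * g b)"
    using assms by (simp add: linear_sum linear_scale)
  also have "\<dots> = h \<bullet> (\<Sum>b\<in>Basis. g b *\<^sub>R b)"
    by (simp add: inner_sum_right mult.commute)
  finally show "g h = h \<bullet> (\<Sum>b\<in>Basis. g b *\<^sub>R b)" .
qed

lemma gderiv_the:
  fixes F :: "'b::euclidean_space \<Rightarrow> real"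
  assumes "F differentiable (at t)"
  shows "GDERIV F t :> (THE D. GDERIV F t :> D)"
proof -
  obtain g where g: "(F has_derivative g) (at t)" using assms differentiable_def by blast
  have lin: "linear g" using g has_derivative_linear by blast
  define D where "D = (\<Sum>b\<in>Basis. g b *\<^sub>R b)"
  have ex: "GDERIV F t :> D" unfolding gderiv_def using g linear_repr[OF lin] D_def by simp
  have uniq: "E = D" if "GDERIV F t :> E" for E
  proof -
    have "(\<lambda>h. h \<bullet> E) = (\<lambda>h. h \<bullet> D)"
      using that ex unfolding gderiv_def by (rule has_derivative_unique)
    then have "(E - D) \<bullet> E = (E - D) \<bullet> D" by metis
    then have "(E - D) \<bullet> (E - D) = 0" by (simp add: inner_diff_right)
    then show ?thesis by simp
  qed
  have "(THE D. GDERIV F t :> D) = D" using ex uniq by (rule the_equality)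
  then show ?thesis using ex by simp
qed

lemma pointwise_bound:
  fixes F :: "'b::euclidean_space \<Rightarrow> real" and G :: "'b \<Rightarrow> 'b"
  assumes diff: "\<And>t. F differentiable (at t)"
    and G: "\<And>t. G t = (THE D. GDERIV F t :> D)"
    and d: "norm \<delta> \<le> norm \<theta>"
  shows "F \<theta> \<le> F (\<theta> + \<delta>) + norm \<theta> * (SUP e\<in>cball 0 (norm \<theta>). norm (G (\<theta> + e)))
     \<or> \<not> bdd_above ((\<lambda>e. norm (G (\<theta> + e))) ` cball 0 (norm \<theta>))"
proof (cases "bdd_above ((\<lambda>e. norm (G (\<theta> + e))) ` cball 0 (norm \<theta>))")
  case bdd: True
  have gd: "GDERIV F t :> G t" for t using gderiv_the[OF diff] G by simp
  define h where "h = (\<lambda>s::real. F (\<theta> + s *\<^sub>R \<delta>))"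
  have hd: "(h has_derivative (\<lambda>u. (u *\<^sub>R \<delta>) \<bullet> G (\<theta> + s *\<^sub>R \<delta>))) (at s within {0..1})" for s
  proof -
    have l: "((\<lambda>s. \<theta> + s *\<^sub>R \<delta>) has_derivative (\<lambda>u. u *\<^sub>R \<delta>)) (at s within {0..1})"
      by (auto intro!: derivative_eq_intros)
    have "(F has_derivative (\<lambda>h. h \<bullet> G (\<theta> + s *\<^sub>R \<delta>))) (at (\<theta> + s *\<^sub>R \<delta>))"
      using gd unfolding gderiv_def by blast
    from has_derivative_compose[OF l this] show ?thesis unfolding h_def o_def by simp
  qed
  obtain \<xi> where \<xi>: "\<xi> \<in> {0..1}" and eq: "h 1 - h 0 = (1 *\<^sub>R \<delta>) \<bullet> G (\<theta> + \<xi> *\<^sub>R \<delta>)"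
    using mvt_very_simple[of 0 1 h "\<lambda>s u. (u *\<^sub>R \<delta>) \<bullet> G (\<theta> + s *\<^sub>R \<delta>)"] hd by force
  have inball: "\<xi> *\<^sub>R \<delta> \<in> cball 0 (norm \<theta>)"
  proof -
    have "norm (\<xi> *\<^sub>R \<delta>) = \<xi> * norm \<delta>" using \<xi> by simp
    also have "\<dots> \<le> norm \<delta>" using \<xi> by (simp add: mult_left_le_one_le)
    finally show ?thesis using d by simp
  qed
  have "norm (G (\<theta> + \<xi> *\<^sub>R \<delta>)) \<le> (SUP e\<in>cball 0 (norm \<theta>). norm (G (\<theta> + e)))"
    using bdd inball by (intro cSUP_upper) auto
  moreover have "- (\<delta> \<bullet> G (\<theta> + \<xi> *\<^sub>R \<delta>)) \<le> norm \<delta> * norm (G (\<theta> + \<xi> *\<^sub>R \<delta>))"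
    by (metis Cauchy_Schwarz_ineq2 abs_le_iff inner_minus_left norm_minus_cancel)
  ultimately have "- (\<delta> \<bullet> G (\<theta> + \<xi> *\<^sub>R \<delta>)) \<le> norm \<theta> * (SUP e\<in>cball 0 (norm \<theta>). norm (G (\<theta> + e)))"
    using d by (meson mult_mono norm_ge_zero order_trans)
  then show ?thesis using eq unfolding h_def by simp
qed simp

theorem proposition8:
  fixes Q :: "'a::euclidean_space measure" and q :: "'a \<Rightarrow> real"
    and f :: "'a \<Rightarrow> 'b::euclidean_space" and \<theta>s :: 'b and c :: real
  assumes "prob_space Q"
    and "q \<in> borel_measurable borel" and "\<And>x. q x \<ge> 0"
    and "Q = density lborel (\<lambda>x. ennreal (q x))"
    and "f \<in> borel_measurable borel"
    and "\<And>\<theta>. integrable Q (\<lambda>x. exp (\<theta> \<bullet> f x))"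
    and "\<And>x \<theta>. (\<lambda>t. ratio Q f x t) differentiable (at \<theta>)"
    and "(\<lambda>x. SUP \<delta>\<in>cball 0 (norm \<theta>s). ennreal (norm (ratio_grad Q f x (\<theta>s + \<delta>))))
           \<in> borel_measurable Q"
    and "ennreal (norm \<theta>s) *
           (\<integral>\<^sup>+x. (SUP \<delta>\<in>cball 0 (norm \<theta>s). ennreal (norm (ratio_grad Q f x (\<theta>s + \<delta>)))) \<partial>Q)
         \<le> ennreal c"
    and "0 < c" and "c < 1"
  shows "(\<integral>\<^sup>+x. (INF \<delta>\<in>cball 0 (norm \<theta>s). ennreal (ratio Q f x (\<theta>s + \<delta>))) \<partial>Q)
         \<ge> ennreal (1 - c)"
proof -
  interpret P: prob_space Q by fact
  define Gx where "Gx = (\<lambda>x. SUP \<delta>\<in>cball 0 (norm \<theta>s). ennreal (norm (ratio_grad Q f x (\<theta>s + \<delta>))))"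
  define N where "N = normconst Q f \<theta>s"
  have setsQ: "sets Q = sets borel" using assms(4) by simp
  have fQ: "f \<in> borel_measurable Q" using assms(5) measurable_cong_sets[OF setsQ refl] by blast
  have intE: "integrable Q (\<lambda>x. exp (\<theta>s \<bullet> f x))" by fact
  have Npos: "N > 0"
  proof -
    have "(\<integral>x. exp (\<theta>s \<bullet> f x) \<partial>Q) \<noteq> 0"
    proof
      assume "(\<integral>x. exp (\<theta>s \<bullet> f x) \<partial>Q) = 0"
      then have "AE x in Q. exp (\<theta>s \<bullet> f x) = 0"
        using integral_nonneg_eq_0_iff_AE[OF intE] by simp
      then have "AE x in Q. False" by simp
      then show False using P.AE_False by simp
    qed
    moreover have "0 \<le> (\<integral>x. exp (\<theta>s \<bullet> f x) \<partial>Q)" by (simp add: integral_nonneg)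
    ultimately have "0 < (\<integral>x. exp (\<theta>s \<bullet> f x) \<partial>Q)" by linarith
    then show ?thesis by (simp add: N_def normconst_def)
  qed
  have rmeas: "(\<lambda>x. ratio Q f x \<theta>s) \<in> borel_measurable Q"
    unfolding ratio_def using fQ by measurable
  have one: "(\<integral>\<^sup>+x. ennreal (ratio Q f x \<theta>s) \<partial>Q) = 1"
  proof -
    have "integrable Q (\<lambda>x. ratio Q f x \<theta>s)"
      unfolding ratio_def using intE by (rule integrable_divide)
    then have "(\<integral>\<^sup>+x. ennreal (ratio Q f x \<theta>s) \<partial>Q) = ennreal (\<integral>x. ratio Q f x \<theta>s \<partial>Q)"
      by (intro nn_integral_eq_integral) (auto simp: ratio_def N_def[symmetric] Npos less_imp_le)
    also have "(\<integral>x. ratio Q f x \<theta>s \<partial>Q) = 1"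
      unfolding ratio_def N_def[symmetric] using Npos by (simp add: N_def normconst_def)
    finally show ?thesis by simp
  qed
  define h where "h = (\<lambda>x. ennreal (ratio Q f x \<theta>s) - ennreal (norm \<theta>s) * Gx x)"
  have Gmeas: "Gx \<in> borel_measurable Q" using assms(8) unfolding Gx_def .
  have hmeas: "h \<in> borel_measurable Q" unfolding h_def using rmeas Gmeas by measurable
  have hle: "h x \<le> (INF \<delta>\<in>cball 0 (norm \<theta>s). ennreal (ratio Q f x (\<theta>s + \<delta>)))" for x
  proof (rule INF_greatest)
    fix \<delta> :: 'b assume \<delta>: "\<delta> \<in> cball 0 (norm \<theta>s)"
    let ?S = "(\<lambda>e. norm (ratio_grad Q f x (\<theta>s + e))) ` cball 0 (norm \<theta>s)"
    show "h x \<le> ennreal (ratio Q f x (\<theta>s + \<delta>))"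
    proof (cases "bdd_above ?S")
      case False
      have "Gx x = top"
      proof -
        have "ennreal (real n) < Gx x" for n :: nat
        proof -
          obtain e where e: "e \<in> cball 0 (norm \<theta>s)" and
            "\<not> norm (ratio_grad Q f x (\<theta>s + e)) \<le> real n"
            using False unfolding bdd_above_def by force
          then have "ennreal (real n) < ennreal (norm (ratio_grad Q f x (\<theta>s + e)))"
            by (simp add: ennreal_less_iff)
          also have "\<dots> \<le> Gx x" unfolding Gx_def using e by (intro SUP_upper) auto
          finally show ?thesis .
        qed
        then show ?thesis
        proof (cases "Gx x")
          case (real r)
          obtain n :: nat where "r < real n" using reals_Archimedean2 by blast
          moreover have "ennreal (real n) < ennreal r" using \<open>\<And>n. ennreal (real n) < Gx x\<close> real by simp
          ultimately show ?thesis using real by (simp add: ennreal_less_iff)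
        qed simp
      qed
      moreover have "\<theta>s \<noteq> 0" using False by (cases "\<theta>s = 0") auto
      ultimately show ?thesis by (simp add: h_def ennreal_mult_top)
    next
      case True
      have "ratio Q f x \<theta>s \<le> ratio Q f x (\<theta>s + \<delta>) + norm \<theta>s * (SUP e\<in>cball 0 (norm \<theta>s). norm (ratio_grad Q f x (\<theta>s + e)))"
        using pointwise_bound[of "\<lambda>t. ratio Q f x t" "ratio_grad Q f x" \<delta> \<theta>s] assms(7) True \<delta>
        by (auto simp: ratio_grad_def)
      moreover have "ennreal (SUP e\<in>cball 0 (norm \<theta>s). norm (ratio_grad Q f x (\<theta>s + e))) \<le> Gx x"
      proof (cases "Gx x")
        case (real g)
        have "norm (ratio_grad Q f x (\<theta>s + e)) \<le> g" if "e \<in> cball 0 (norm \<theta>s)" for e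
        proof -
          have "ennreal (norm (ratio_grad Q f x (\<theta>s + e))) \<le> Gx x"
            unfolding Gx_def using that by (intro SUP_upper) auto
          then show ?thesis using real by (simp add: ennreal_le_iff)
        qed
        then have "(SUP e\<in>cball 0 (norm \<theta>s). norm (ratio_grad Q f x (\<theta>s + e))) \<le> g"
          by (intro cSUP_least) auto
        then show ?thesis using real by (simp add: ennreal_leI)
      qed simp
      ultimately have "ennreal (ratio Q f x \<theta>s) \<le> ennreal (ratio Q f x (\<theta>s + \<delta>)) + ennreal (norm \<theta>s) * Gx x"
      proof -
        let ?S = "(SUP e\<in>cball 0 (norm \<theta>s). norm (ratio_grad Q f x (\<theta>s + e)))"
        assume a1: "ratio Q f x \<theta>s \<le> ratio Q f x (\<theta>s + \<delta>) + norm \<theta>s * ?S"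
          and a2: "ennreal ?S \<le> Gx x"
        have S0: "0 \<le> ?S"
          using True by (intro order_trans[OF norm_ge_zero cSUP_upper[of 0]]) auto
        have "ennreal (ratio Q f x \<theta>s) \<le> ennreal (max (ratio Q f x (\<theta>s + \<delta>)) 0 + norm \<theta>s * ?S)"
          using a1 by (intro ennreal_leI) linarith
        also have "\<dots> = ennreal (ratio Q f x (\<theta>s + \<delta>)) + ennreal (norm \<theta>s) * ennreal ?S"
          using S0 by (subst ennreal_plus) (auto simp: ennreal_mult max_def ennreal_eq_0_iff)
        also have "\<dots> \<le> ennreal (ratio Q f x (\<theta>s + \<delta>)) + ennreal (norm \<theta>s) * Gx x"
          using a2 by (intro add_left_mono mult_left_mono) auto
        finally show ?thesis .
      qed
      then show ?thesis unfolding h_def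
        by (simp add: ennreal_minus_le_iff add.commute)
    qed
  qed
  have "1 \<le> (\<integral>\<^sup>+x. h x + ennreal (norm \<theta>s) * Gx x \<partial>Q)"
    unfolding one[symmetric] h_def
    by (intro nn_integral_mono) (metis diff_add_self_ennreal le_iff_sup sup.cobounded2 add.commute
         le_cases ennreal_minus_le_iff order_refl)
  also have "\<dots> = (\<integral>\<^sup>+x. h x \<partial>Q) + ennreal (norm \<theta>s) * (\<integral>\<^sup>+x. Gx x \<partial>Q)"
    using hmeas Gmeas by (simp add: nn_integral_add nn_integral_cmult)
  also have "\<dots> \<le> (\<integral>\<^sup>+x. h x \<partial>Q) + ennreal c"
    using assms(9) unfolding Gx_def by (intro add_left_mono) simp
  finally have A: "1 \<le> (\<integral>\<^sup>+x. h x \<partial>Q) + ennreal c" .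
  have B: "ennreal (1 - c) \<le> (\<integral>\<^sup>+x. h x \<partial>Q)"
    using A assms(10,11)
    by (smt (verit, del_insts) ennreal_1 ennreal_minus ennreal_one_less_top
        less_diff_eq_ennreal verit_comp_simplify(3))
  also have "\<dots> \<le> (\<integral>\<^sup>+x. (INF \<delta>\<in>cball 0 (norm \<theta>s). ennreal (ratio Q f x (\<theta>s + \<delta>))) \<partial>Q)"
    by (intro nn_integral_mono hle)
  finally show ?thesis .
qed

end
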